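(* Let $\mathcal{O}$ be the set of $24$-tuples of integers $a_1A_1+a_2A_2$ with $a_1\in\mathbb{Z}$ and $a_2=\pm3^\alpha2^\beta$ for some $\alpha\in\{0,1\}$, $\beta\in\mathbb{N}$, such that $3\nmid\gcd(a_1,a_2)$, where $A_1=(1,0,-1)^8$ and $A_2=(0,1,-1,-1,3,-2,-2,5,-3,-3,7,-4,-4,9,-5,-5,11,-6,-6,13,-7,-7,15,-8)$. Then for every $A\in\mathcal{O}$ and every odd positive integer $m$, the orbit of $S=\mathrm{IAP}(\pi_m(A),\pi_m(A)X_{24})$ is $(3m,3m)$-periodic and the triangles $\nabla S[3\lambda m]$ are balanced in $\mathbb{Z}/m\mathbb{Z}$ for all non-negative integers $\lambda$.
   Context: $\pi_m$ is reduction mod $m$; tuples are row vectors; $X_{24}=(\delta_{r,s}+\delta_{r,25-s})_{1\le r,s\le24}$. For $24$-tuples $A=(a_0,\dots,a_{23})$, $D=(d_0,\dots,d_{23})$, $\mathrm{IAP}(A,D)=(u_j)_{j\in\mathbb{Z}}$ with $u_{24q+r}=a_r+qd_r$. $S[n]=(u_0,\dots,u_{n-1})$. The orbit of $(u_j)$ is $(a_{i,j})_{(i,j)\in\mathbb{N}\times\mathbb{Z}}$ with $a_{0,j}=u_j$, $a_{i,j}=-a_{i-1,j}-a_{i-1,j+1}$; it is $(p,q)$-periodic if $a_{i+q,j}=a_{i,j+p}=a_{i,j}$ for all $(i,j)$. For a finite sequence, $\nabla(u_0,\dots,u_{n-1})=(a_{i,j})_{i+j<n}$ defined by the same rule; it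 is balanced if every element of $\mathbb{Z}/m\mathbb{Z}$ occurs equally often among its entries. *)

theory Defs
  imports Main
begin

text \<open>24-tuples are represented as functions nat => int, index r in 0..23
  (0-based; the paper's a_0..a_23). Elements of Z/mZ are represented by
  their canonical residues in {0..m-1}.\<close>

definition A1 :: "nat \<Rightarrow> int" where
  "A1 r = [1, 0, -1] ! (r mod 3)"

definition A2 :: "nat \<Rightarrow> int" where
  "A2 r = [0,1,-1,-1,3,-2,-2,5,-3,-3,7,-4,-4,9,-5,-5,11,-6,-6,13,-7,-7,15,-8] ! r"

definition tuplesO :: "(nat \<Rightarrow> int) set" where
  "tuplesO = {A. \<exists>a1 a2 :: int. \<exists>\<alpha>::nat. \<exists>\<beta>::nat. \<exists>s::int.
      (s = 1 \<or> s = -1) \<and> \<alpha> \<in> {0,1} \<and> a2 = s * 3^\<alpha> * 2^\<beta> \<and>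
      \<not> (3 dvd gcd a1 a2) \<and> A = (\<lambda>r. a1 * A1 r + a2 * A2 r)}"

definition pim :: "int \<Rightarrow> (nat \<Rightarrow> int) \<Rightarrow> (nat \<Rightarrow> int)" where
  "pim m A = (\<lambda>r. A r mod m)"

definition X24 :: "nat \<Rightarrow> nat \<Rightarrow> int" where
  "X24 r s = (if r = s then 1 else 0) + (if r = 23 - s then 1 else 0)"

definition mulX24 :: "int \<Rightarrow> (nat \<Rightarrow> int) \<Rightarrow> (nat \<Rightarrow> int)" where
  "mulX24 m A = (\<lambda>s. (\<Sum>r<24. A r * X24 r s) mod m)"

definition IAP :: "int \<Rightarrow> (nat \<Rightarrow> int) \<Rightarrow> (nat \<Rightarrow> int) \<Rightarrow> int \<Rightarrow> int" where
  "IAP m A D j = (A (nat (j mod 24)) + (j div 24) * D (nat (j mod 24))) mod m"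

primrec orbit :: "int \<Rightarrow> (int \<Rightarrow> int) \<Rightarrow> nat \<Rightarrow> int \<Rightarrow> int" where
  "orbit m u 0 j = u j mod m"
| "orbit m u (Suc i) j = (- orbit m u i j - orbit m u i (j + 1)) mod m"

definition periodic_orbit :: "int \<Rightarrow> (int \<Rightarrow> int) \<Rightarrow> int \<Rightarrow> nat \<Rightarrow> bool" where
  "periodic_orbit m u p q \<longleftrightarrow>
     (\<forall>i j. orbit m u (i + q) j = orbit m u i j \<and> orbit m u i (j + p) = orbit m u i j)"

definition prefix_seq :: "(int \<Rightarrow> int) \<Rightarrow> nat \<Rightarrow> int list" where
  "prefix_seq u n = map (\<lambda>j. u (int j)) [0..<n]"

text \<open>Triangle nabla(u_0..u_{n-1}) over Z/mZ: entries tri m xs i j for i + j < length xs.\<close>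
primrec tri :: "int \<Rightarrow> int list \<Rightarrow> nat \<Rightarrow> nat \<Rightarrow> int" where
  "tri m xs 0 j = (xs ! j) mod m"
| "tri m xs (Suc i) j = (- tri m xs i j - tri m xs i (j + 1)) mod m"

definition balanced :: "int \<Rightarrow> int list \<Rightarrow> bool" where
  "balanced m xs \<longleftrightarrow>
     (\<forall>x \<in> {0..<m}. \<forall>y \<in> {0..<m}.
        card {(i, j). i + j < length xs \<and> tri m xs i j = x}
      = card {(i, j). i + j < length xs \<and> tri m xs i j = y})"

end

theory Submission
  imports Defs "HOL-Number_Theory.Number_Theory"
begin


definition FF :: "int \<Rightarrow> int \<Rightarrow> nat \<Rightarrow> int \<Rightarrow> int" where
 "FF a1 a2 i j = (let e = (j - int i) div 3 in
    if (j - int i) mod 3 = 0 then a1 - a2*e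
    else if (j - int i) mod 3 = 1 then a2*(int i + 2*e + 1)
    else -a1 - a2*(int i + e + 1))"

lemma FF0: "j - int i = 3*e \<Longrightarrow> FF a1 a2 i j = a1 - a2*e"
  unfolding FF_def by simp
lemma FF1: "j - int i = 3*e+1 \<Longrightarrow> FF a1 a2 i j = a2*(int i + 2*e+1)"
  unfolding FF_def by simp
lemma FF2: "j - int i = 3*e+2 \<Longrightarrow> FF a1 a2 i j = -a1 - a2*(int i + e+1)"
  unfolding FF_def by simp

lemma three_cases: obtains e where "(x::int) = 3*e" | e where "x = 3*e+1" | e where "x = 3*e+2"
proof -
  have "x = 3*(x div 3) + x mod 3" by simp
  moreover have "x mod 3 = 0 \<or> x mod 3 = 1 \<or> x mod 3 = 2" by presburger
  ultimately show ?thesis using that by (metis add.right_neutral)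
qed

lemma FF_rec: "FF a1 a2 (Suc i) j = - FF a1 a2 i j - FF a1 a2 i (j+1)"
proof (cases "j - int i" rule: three_cases)
  case (1 e)
  have "FF a1 a2 (Suc i) j = -a1 - a2*(int (Suc i) + (e-1)+1)" by (rule FF2) (use 1 in simp)
  moreover have "FF a1 a2 i (j+1) = a2*(int i + 2*e+1)" by (rule FF1) (use 1 in simp)
  moreover have "FF a1 a2 i j = a1 - a2*e" by (rule FF0) (use 1 in simp)
  ultimately show ?thesis by (simp add: algebra_simps)
next
  case (2 e)
  have "FF a1 a2 (Suc i) j = a1 - a2*e" by (rule FF0) (use 2 in simp)
  moreover have "FF a1 a2 i (j+1) = -a1 - a2*(int i + e+1)" by (rule FF2) (use 2 in simp)
  moreover have "FF a1 a2 i j = a2*(int i + 2*e+1)" by (rule FF1) (use 2 in simp)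
  ultimately show ?thesis by (simp add: algebra_simps)
next
  case (3 e)
  have "FF a1 a2 (Suc i) j = a2*(int (Suc i) + 2*e+1)" by (rule FF1) (use 3 in simp)
  moreover have "FF a1 a2 i (j+1) = a1 - a2*(e+1)" by (rule FF0) (use 3 in simp)
  moreover have "FF a1 a2 i j = -a1 - a2*(int i + e+1)" by (rule FF2) (use 3 in simp)
  ultimately show ?thesis by (simp add: algebra_simps)
qed


lemma lt8: "(k::nat) < 8 \<Longrightarrow> k = 0 \<or> k = 1 \<or> k = 2 \<or> k = 3 \<or> k = 4 \<or> k = 5 \<or> k = 6 \<or> k = 7"
  by auto

lemma A2_0: "k < 8 \<Longrightarrow> A2 (3*k) = - int k"
  by (drule lt8) (auto simp: A2_def)
lemma A2_1: "k < 8 \<Longrightarrow> A2 (3*k+1) = 2 * int k + 1"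
  by (drule lt8) (auto simp: A2_def)
lemma A2_2: "k < 8 \<Longrightarrow> A2 (3*k+2) = - int k - 1"
  by (drule lt8) (auto simp: A2_def)
lemma A1_0: "A1 (3*k) = 1" by (simp add: A1_def)
lemma A1_1: "A1 (3*k+1) = 0"
proof -
  have "(3*k+1) mod 3 = (1::nat)" by presburger
  then show ?thesis by (simp add: A1_def)
qed
lemma A1_2: "A1 (3*k+2) = -1"
proof -
  have "(3*k+2) mod 3 = (2::nat)" by presburger
  then show ?thesis by (simp add: A1_def)
qed

lemma base_row:
  assumes "r < 24"
  shows "a1*A1 r + a2*A2 r + q*((a1*A1 r + a2*A2 r) + (a1*A1(23-r) + a2*A2(23-r)))
     = FF a1 a2 0 (24*q + int r)"
proof -
  define k where "k = r div 3"
  have k8: "k < 8" using assms by (simp add: k_def)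
  have k7: "7 - k < 8" by simp
  have ik: "int (7 - k) = 7 - int k" using k8 by simp
  have "r mod 3 = 0 \<or> r mod 3 = 1 \<or> r mod 3 = 2" by presburger
  moreover have "r = 3*k + r mod 3" unfolding k_def by simp
  ultimately consider "r = 3*k" | "r = 3*k+1" | "r = 3*k+2" by (metis add.right_neutral)
  then show ?thesis
  proof cases
    case 1
    have "23 - r = 3*(7-k)+2" using 1 k8 by simp
    then have e: "A1 (23-r) = -1" "A2 (23 - r) = int k - 8" using A1_2 A2_2[OF k7] ik by simp_all
    have e2: "A1 r = 1" "A2 r = - int k" using 1 A2_0[OF k8] A1_0 by simp_all
    have ff: "FF a1 a2 0 (24*q + int r) = a1 - a2*(8*q + int k)"
      by (rule FF0) (simp add: 1)
    show ?thesis unfolding ff e e2 by (simp add: algebra_simps)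
  next
    case 2
    have "23 - r = 3*(7-k)+1" using 2 k8 by simp
    then have e: "A1 (23-r) = 0" "A2 (23 - r) = 15 - 2 * int k" using A1_1 A2_1[OF k7] ik by simp_all
    have e2: "A1 r = 0" "A2 r = 2 * int k + 1" using 2 A2_1[OF k8] A1_1 by simp_all
    have ff: "FF a1 a2 0 (24*q + int r) = a2*(int 0 + 2*(8*q + int k) + 1)"
      by (rule FF1) (simp add: 2)
    show ?thesis unfolding ff e e2 by (simp add: algebra_simps)
  next
    case 3
    have "23 - r = 3*(7-k)" using 3 k8 by simp
    then have e: "A1 (23-r) = 1" "A2 (23 - r) = int k - 7" using A1_0 A2_0[OF k7] ik by simp_all
    have e2: "A1 r = -1" "A2 r = - int k - 1" using 3 A2_2[OF k8] A1_2 by simp_all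
    have ff: "FF a1 a2 0 (24*q + int r) = -a1 - a2*(int 0 + (8*q + int k) + 1)"
      by (rule FF2) (simp add: 3)
    show ?thesis unfolding ff e e2 by (simp add: algebra_simps)
  qed
qed

lemma sumX: "s < 24 \<Longrightarrow> (\<Sum>r<24. f r * X24 r s) = f s + f (23 - s)"
proof -
  assume s: "s < 24"
  have "(\<Sum>r<24. f r * X24 r s) = (\<Sum>r<24. (if r = s then f r else 0)) + (\<Sum>r<24. (if r = 23 - s then f r else 0))"
    unfolding sum.distrib[symmetric] by (rule sum.cong) (auto simp: X24_def)
  also have "\<dots> = f s + f (23 - s)" using s by (simp add: sum.delta')
  finally show ?thesis .
qed

lemma row0:
  assumes "A = (\<lambda>r. a1 * A1 r + a2 * A2 r)"
  shows "IAP m (pim m A) (mulX24 m (pim m A)) j mod m = FF a1 a2 0 j mod m"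
proof -
  define r where "r = nat (j mod 24)"
  define q where "q = j div 24"
  have r24: "r < 24" unfolding r_def by simp
  have j: "j = 24*q + int r" unfolding r_def q_def by simp
  have D: "mulX24 m (\<lambda>r. A r mod m) r = (A r mod m + A (23 - r) mod m) mod m"
    unfolding mulX24_def pim_def using sumX[OF r24] by simp
  have "IAP m (pim m A) (mulX24 m (pim m A)) j = (A r mod m + q * ((A r mod m + A (23 - r) mod m) mod m)) mod m"
    unfolding IAP_def pim_def r_def[symmetric] q_def[symmetric] D by simp
  also have "\<dots> = (A r + q * (A r + A (23 - r))) mod m"
    by (metis mod_add_eq mod_add_right_eq mod_mult_right_eq)
  also have "A r + q * (A r + A (23 - r)) = FF a1 a2 0 j"
    unfolding j using base_row[OF r24, of a1 a2 q] assms by simp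
  finally show ?thesis by simp
qed


lemma orbit_FF:
  assumes "\<And>j. u j mod m = FF a1 a2 0 j mod m"
  shows "orbit m u i j = FF a1 a2 i j mod m"
proof (induction i arbitrary: j)
  case 0
  then show ?case using assms by simp
next
  case (Suc i)
  have "orbit m u (Suc i) j = (- (FF a1 a2 i j mod m) - (FF a1 a2 i (j+1) mod m)) mod m"
    using Suc by simp
  also have "\<dots> = (- (FF a1 a2 i j mod m) - FF a1 a2 i (j+1)) mod m"
    by (rule mod_diff_right_eq)
  also have "\<dots> = ((- (FF a1 a2 i j mod m)) mod m - FF a1 a2 i (j+1)) mod m"
    by (rule mod_diff_left_eq[symmetric])
  also have "\<dots> = ((- FF a1 a2 i j) mod m - FF a1 a2 i (j+1)) mod m"
    by (simp only: mod_minus_eq)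
  also have "\<dots> = (- FF a1 a2 i j - FF a1 a2 i (j+1)) mod m"
    by (rule mod_diff_left_eq)
  finally show ?case by (simp add: FF_rec)
qed

lemma FF_per_i:
  assumes "int p = 3*m"
  shows "FF a1 a2 (i + p) j mod m = FF a1 a2 i j mod m"
proof (cases "j - int i" rule: three_cases)
  case (1 e)
  have "FF a1 a2 (i+p) j = a1 - a2*(e - m)" by (rule FF0) (use 1 assms in simp)
  moreover have "FF a1 a2 i j = a1 - a2*e" by (rule FF0) (use 1 in simp)
  ultimately have "FF a1 a2 (i+p) j = FF a1 a2 i j + m * a2" by (simp add: algebra_simps)
  then show ?thesis by (simp add: mod_eq_dvd_iff)
next
  case (2 e)
  have "FF a1 a2 (i+p) j = a2*(int (i+p) + 2*(e - m) + 1)" by (rule FF1) (use 2 assms in simp)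
  moreover have "FF a1 a2 i j = a2*(int i + 2*e+1)" by (rule FF1) (use 2 in simp)
  ultimately have "FF a1 a2 (i+p) j = FF a1 a2 i j + m * a2" using assms by (simp add: algebra_simps)
  then show ?thesis by (simp add: mod_eq_dvd_iff)
next
  case (3 e)
  have "FF a1 a2 (i+p) j = -a1 - a2*(int (i+p) + (e - m) + 1)" by (rule FF2) (use 3 assms in simp)
  moreover have "FF a1 a2 i j = -a1 - a2*(int i + e+1)" by (rule FF2) (use 3 in simp)
  ultimately have "FF a1 a2 (i+p) j = FF a1 a2 i j + m * (-2*a2)" using assms by (simp add: algebra_simps)
  then show ?thesis by (simp add: mod_eq_dvd_iff)
qed

lemma FF_per_j:
  shows "FF a1 a2 i (j + 3*m) mod m = FF a1 a2 i j mod m"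
proof (cases "j - int i" rule: three_cases)
  case (1 e)
  have "FF a1 a2 i (j+3*m) = a1 - a2*(e + m)" by (rule FF0) (use 1 in simp)
  moreover have "FF a1 a2 i j = a1 - a2*e" by (rule FF0) (use 1 in simp)
  ultimately have "FF a1 a2 i (j+3*m) = FF a1 a2 i j + m * (-a2)" by (simp add: algebra_simps)
  then show ?thesis by (simp add: mod_eq_dvd_iff)
next
  case (2 e)
  have "FF a1 a2 i (j+3*m) = a2*(int i + 2*(e + m) + 1)" by (rule FF1) (use 2 in simp)
  moreover have "FF a1 a2 i j = a2*(int i + 2*e+1)" by (rule FF1) (use 2 in simp)
  ultimately have "FF a1 a2 i (j+3*m) = FF a1 a2 i j + m * (2*a2)" by (simp add: algebra_simps)
  then show ?thesis by (simp add: mod_eq_dvd_iff)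
next
  case (3 e)
  have "FF a1 a2 i (j+3*m) = -a1 - a2*(int i + (e + m) + 1)" by (rule FF2) (use 3 in simp)
  moreover have "FF a1 a2 i j = -a1 - a2*(int i + e+1)" by (rule FF2) (use 3 in simp)
  ultimately have "FF a1 a2 i (j+3*m) = FF a1 a2 i j + m * (-a2)" by (simp add: algebra_simps)
  then show ?thesis by (simp add: mod_eq_dvd_iff)
qed

lemma tri_orbit:
  assumes "xs = prefix_seq u n"
  shows "i + j < length xs \<Longrightarrow> tri m xs i j = orbit m u i (int j)"
proof (induction i arbitrary: j)
  case 0
  then show ?case using assms by (simp add: prefix_seq_def)
next
  case (Suc i)
  then show ?case by (simp add: add.commute)
qed


lemma window1:
  fixes m g c r a :: int
  assumes m: "m > 0" and cop: "coprime g m"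
  shows "card {k. a \<le> k \<and> k < a + m \<and> (c + g*k) mod m = r mod m} = 1"
proof -
  obtain g' where g': "[g * g' = 1] (mod m)" using cong_solve_coprime_int[OF cop] by blast
  define k0 where "k0 = a + (g'*(r - c) - a) mod m"
  have k0in: "a \<le> k0" "k0 < a + m" using m by (auto simp: k0_def)
  have "k0 mod m = (a + (g'*(r - c) - a)) mod m" unfolding k0_def by (simp add: mod_add_right_eq)
  then have c1: "[k0 = g'*(r-c)] (mod m)" by (simp add: cong_def)
  have "[c + g*k0 = c + g*(g'*(r-c))] (mod m)"
    by (intro cong_add cong_mult cong_refl c1)
  moreover have "[g*(g'*(r-c)) = 1 * (r - c)] (mod m)"
    using cong_mult[OF g' cong_refl[of "r-c"]] by (simp add: mult.assoc)
  ultimately have "[c + g*k0 = c + 1 * (r - c)] (mod m)"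
    using cong_add[OF cong_refl[of c]] cong_trans by blast
  then have k0P: "(c + g*k0) mod m = r mod m" by (simp add: cong_def)
  have "{k. a \<le> k \<and> k < a + m \<and> (c + g*k) mod m = r mod m} = {k0}"
  proof safe
    fix k assume k: "a \<le> k" "k < a + m" "(c + g*k) mod m = r mod m"
    then have "(c + g*k) mod m = (c + g*k0) mod m" using k0P by simp
    then have "m dvd (c + g*k) - (c + g*k0)" by (simp add: mod_eq_dvd_iff)
    then have "m dvd g * (k - k0)" by (simp add: algebra_simps)
    then have "m dvd (k - k0)" using cop coprime_dvd_mult_right_iff[of m g "k - k0"]
      by (simp add: coprime_commute)
    then have "(k - a) mod m = (k0 - a) mod m"
      by (metis mod_eq_dvd_iff diff_diff_cancel diff_right_commute
          dvd_diff dvd_refl mod_diff_left_eq)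
    moreover have "(k - a) mod m = k - a" using k by simp
    moreover have "(k0 - a) mod m = k0 - a" using k0in by simp
    ultimately show "k = k0" by simp
  qed (use k0in k0P in auto)
  then show ?thesis by simp
qed

lemma finite_int_range: "finite {k::int. a \<le> k \<and> k < b \<and> P k}"
  by (rule finite_subset[of _ "{a..<b}"]) auto

lemma window:
  fixes m g c r a :: int
  assumes m: "m > 0" and cop: "coprime g m"
  shows "card {k. a \<le> k \<and> k < a + int lam * m \<and> (c + g*k) mod m = r mod m} = lam"
proof (induction lam)
  case 0
  have "{k. a \<le> k \<and> k < a + int 0 * m \<and> (c + g*k) mod m = r mod m} = {}" by auto
  then show ?case by (metis card.empty)
next
  case (Suc lam)
  let ?S = "{k. a \<le> k \<and> k < a + int lam * m \<and> (c + g*k) mod m = r mod m}"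
  let ?B = "{k. a + int lam * m \<le> k \<and> k < a + int lam * m + m \<and> (c + g*k) mod m = r mod m}"
  have "{k. a \<le> k \<and> k < a + int (Suc lam) * m \<and> (c + g*k) mod m = r mod m} = ?S \<union> ?B"
    using m by (auto simp: algebra_simps) (smt (verit) mult_nonneg_nonneg of_nat_0_le_iff)
  moreover have "card ?B = 1" by (rule window1[OF m cop])
  moreover have "?S \<inter> ?B = {}" by auto
  moreover have "finite ?S" "finite ?B" using finite_int_range by auto
  ultimately show ?case using Suc by (simp add: card_Un_disjoint)
qed


definition EE :: "int \<Rightarrow> (int \<times> int) set" where
  "EE M = {(y,t). 0 \<le> y \<and> 0 \<le> y + 3*t \<and> 2*y + 3*t \<le> 3*M - 1}"

lemma finite_EE: "finite (EE M)"
proof (rule finite_subset)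
  show "EE M \<subseteq> {0..3*M} \<times> {-M..M}"
  proof (rule subsetI)
    fix x assume "x \<in> EE M"
    moreover obtain y t where "x = (y,t)" by (cases x)
    ultimately have "0 \<le> y" "0 \<le> y + 3*t" "2*y + 3*t \<le> 3*M - 1" unfolding EE_def by auto
    then have "0 \<le> y \<and> y \<le> 3*M \<and> -M \<le> t \<and> t \<le> M" by linarith
    then show "x \<in> {0..3*M} \<times> {-M..M}" using \<open>x = (y,t)\<close> by auto
  qed
qed simp

lemma finite_EE_sub: "finite {e \<in> EE M. P e}"
  using finite_EE by simp



lemma W_shift:
  fixes m M r :: int
  assumes m: "m > 0" and odd: "odd m" and M: "M = int lam * m"
  shows "card {e \<in> EE M. snd e mod m = r mod m} = card {e \<in> EE M. snd e mod m = (r+1) mod m}"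
proof -
  let ?S0 = "{e \<in> EE M. snd e mod m = r mod m}"
  let ?S1 = "{e \<in> EE M. snd e mod m = (r+1) mod m}"
  let ?A = "{e \<in> EE M. snd e mod m = r mod m \<and> fst e \<ge> 2}"
  let ?L1 = "{e \<in> EE M. snd e mod m = r mod m \<and> fst e < 2}"
  let ?B = "{e \<in> EE M. snd e mod m = (r+1) mod m \<and> 1 \<le> fst e + 3 * snd e \<and> 2 * fst e + 3 * snd e \<le> 3*M - 2}"
  let ?L2 = "{e \<in> EE M. snd e mod m = (r+1) mod m \<and> \<not> (1 \<le> fst e + 3 * snd e \<and> 2 * fst e + 3 * snd e \<le> 3*M - 2)}"
  have cop1: "coprime (1::int) m" by simp
  have cop2: "coprime (-2::int) m" using odd by (simp add: coprime_commute)
  have s0: "?S0 = ?A \<union> ?L1" by auto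
  have s1: "?S1 = ?B \<union> ?L2" by auto
  have fA: "finite ?A" by (rule finite_subset[OF _ finite_EE[of M]]) auto
  have fL1: "finite ?L1" by (rule finite_subset[OF _ finite_EE[of M]]) auto
  have fB: "finite ?B" by (rule finite_subset[OF _ finite_EE[of M]]) auto
  have fL2: "finite ?L2" by (rule finite_subset[OF _ finite_EE[of M]]) auto
  have c0: "card ?S0 = card ?A + card ?L1"
    unfolding s0 by (rule card_Un_disjoint[OF fA fL1]) auto
  have c1: "card ?S1 = card ?B + card ?L2"
    unfolding s1 by (rule card_Un_disjoint[OF fB fL2]) auto
  have "bij_betw (\<lambda>(y,t). (y-2, t+1)) ?A ?B"
  proof (rule bij_betw_byWitness[where f' = "\<lambda>(y,t). (y+2, t-1)"])
    show "\<forall>a\<in>?A. (\<lambda>(y,t). (y+2, t-1)) ((\<lambda>(y,t). (y-2, t+1)) a) = a" by auto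
    show "\<forall>a\<in>?B. (\<lambda>(y,t). (y-2, t+1)) ((\<lambda>(y,t). (y+2, t-1)) a) = a" by auto
    show "(\<lambda>(y,t). (y-2, t+1)) ` ?A \<subseteq> ?B"
      unfolding EE_def by auto (metis mod_add_left_eq)
    show "(\<lambda>(y,t). (y+2, t-1)) ` ?B \<subseteq> ?A"
    proof (rule image_subsetI)
      fix x assume hx: "x \<in> ?B"
      obtain y t where xy: "x = (y,t)" by (cases x)
      from hx have h: "(y,t) \<in> EE M" "t mod m = (r+1) mod m" "1 \<le> y + 3*t" "2*y + 3*t \<le> 3*M-2" using xy by auto
      have "(t - 1) mod m = (t mod m - 1) mod m" by (simp add: mod_diff_left_eq)
      also have "\<dots> = ((r+1) mod m - 1) mod m" using h by simp
      also have "\<dots> = r mod m" by (simp add: mod_diff_left_eq)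
      finally have "(y+2, t-1) \<in> ?A" using h unfolding EE_def by auto
      then show "(\<lambda>(y,t). (y+2, t-1)) x \<in> ?A" using xy by simp
    qed
  qed
  then have cAB: "card ?A = card ?B" by (rule bij_betw_same_card)
  define T1 where "T1 = {t. 0 \<le> t \<and> t < 0 + int lam * m \<and> (0 + 1*t) mod m = r mod m}"
  have "?L1 = {0,1} \<times> T1" unfolding T1_def EE_def M by auto
  then have cL1: "card ?L1 = 2 * lam" using window[OF m cop1, of 0 lam 0 r] by (simp add: T1_def card_cartesian_product)
  define T2 where "T2 = {t. 1 - M \<le> t \<and> t < (1 - M) + int lam * m \<and> (0 + 1*t) mod m = (r+1) mod m}"
  define K where "K = {k. 0 \<le> k \<and> k < 0 + int lam * m \<and> ((M-1) + (-2)*k) mod m = (r+1) mod m}"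
  have L2a: "?L2 \<subseteq> (\<lambda>t. (-3*t, t)) ` T2 \<union> (\<lambda>k. (1+3*k, M-1-2*k)) ` K"
  proof (rule subsetI)
    fix x assume hx: "x \<in> ?L2"
    obtain y t where xy: "x = (y,t)" by (cases x)
    from hx xy have e: "0 \<le> y" "0 \<le> y + 3*t" "2*y + 3*t \<le> 3*M - 1" and tm: "t mod m = (r+1) mod m"
      and nb: "\<not> (1 \<le> y + 3*t \<and> 2*y + 3*t \<le> 3*M - 2)" unfolding EE_def by auto
    show "x \<in> (\<lambda>t. (-3*t, t)) ` T2 \<union> (\<lambda>k. (1+3*k, M-1-2*k)) ` K"
    proof (cases "y + 3*t = 0")
      case True
      then have "y = -3*t" by simp
      moreover have "t \<in> T2" unfolding T2_def using e True tm M[symmetric] by auto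
      ultimately show ?thesis using xy by auto
    next
      case False
      then have eq: "2*y + 3*t = 3*M - 1" using e nb by auto
      define k where "k = (y - 1) div 3"
      have yk: "y = 1 + 3*k" "t = M - 1 - 2*k" using eq unfolding k_def by presburger+
      have "k \<in> K" unfolding K_def using yk e tm M[symmetric] by (auto simp: algebra_simps)
      then show ?thesis using xy yk by auto
    qed
  qed
  have L2b: "(\<lambda>t. (-3*t, t)) ` T2 \<subseteq> ?L2"
  proof (rule image_subsetI)
    fix t assume "t \<in> T2"
    then show "(-3*t, t) \<in> ?L2" unfolding T2_def EE_def M by (auto simp: algebra_simps)
  qed
  have L2c: "(\<lambda>k. (1+3*k, M-1-2*k)) ` K \<subseteq> ?L2"
  proof (rule image_subsetI)
    fix k assume "k \<in> K"
    then show "(1+3*k, M-1-2*k) \<in> ?L2" unfolding K_def EE_def M by (auto simp: algebra_simps)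
  qed
  have L2: "?L2 = (\<lambda>t. (-3*t, t)) ` T2 \<union> (\<lambda>k. (1+3*k, M-1-2*k)) ` K"
    using L2a L2b L2c by blast
  have d: "(\<lambda>t. (-3*t, t)) ` T2 \<inter> (\<lambda>k. (1+3*k, M-1-2*k)) ` K = {}" by auto presburger
  have "card ?L2 = card ((\<lambda>t. (-3*t, t)) ` T2) + card ((\<lambda>k. (1+3*k, M-1-2*k)) ` K)"
    unfolding L2 by (rule card_Un_disjoint) (use d in \<open>auto simp: T2_def K_def intro: finite_int_range\<close>)
  also have "\<dots> = card T2 + card K"
    by (subst card_image, simp add: inj_on_def)+ simp
  also have "card T2 = lam" unfolding T2_def by (rule window[OF m cop1])
  also have "card K = lam" unfolding K_def by (rule window[OF m cop2])
  finally have cL2: "card ?L2 = 2 * lam" by simp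
  show ?thesis using c0 c1 cAB cL1 cL2 by simp
qed



lemma W_const:
  fixes m M r :: int
  assumes m: "m > 0" and odd: "odd m" and M: "M = int lam * m"
  shows "card {e \<in> EE M. snd e mod m = r mod m} = card {e \<in> EE M. snd e mod m = 0}"
proof (induction r rule: int_induct[where k = 0])
  case base
  then show ?case by simp
next
  case (step1 i)
  then show ?case using W_shift[OF m odd M, of i] by simp
next
  case (step2 i)
  then show ?case using W_shift[OF m odd M, of "i - 1"] by simp
qed

lemma count_E:
  fixes m M \<delta> a2 v :: int
  assumes m: "m > 0" and odd: "odd m" and M: "M = int lam * m"
  shows "card {e \<in> EE M. (\<delta> + a2 * snd e) mod m = v}
     = card {e \<in> EE M. snd e mod m = 0} * card {r. 0 \<le> r \<and> r < 0 + int 1 * m \<and> (\<delta> + a2*r) mod m = v}"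
proof -
  let ?R = "{r. 0 \<le> r \<and> r < 0 + int 1 * m \<and> (\<delta> + a2*r) mod m = v}"
  let ?F = "\<lambda>r. {e \<in> EE M. snd e mod m = r}"
  have key: "(\<delta> + a2 * (t mod m)) mod m = (\<delta> + a2 * t) mod m" for t
    by (metis mod_add_right_eq mod_mult_right_eq)
  have eq1: "{e \<in> EE M. (\<delta> + a2 * snd e) mod m = v} \<subseteq> (\<Union>r\<in>?R. ?F r)"
  proof (rule subsetI)
    fix e assume "e \<in> {e \<in> EE M. (\<delta> + a2 * snd e) mod m = v}"
    then have "e \<in> EE M" "(\<delta> + a2 * snd e) mod m = v" by auto
    moreover have "snd e mod m \<in> ?R" using calculation key[of "snd e"] m by auto
    ultimately show "e \<in> (\<Union>r\<in>?R. ?F r)" by blast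
  qed
  have eq2: "(\<Union>r\<in>?R. ?F r) \<subseteq> {e \<in> EE M. (\<delta> + a2 * snd e) mod m = v}"
  proof (rule subsetI)
    fix e assume "e \<in> (\<Union>r\<in>?R. ?F r)"
    then obtain r where "r \<in> ?R" "e \<in> EE M" "snd e mod m = r" by auto
    then show "e \<in> {e \<in> EE M. (\<delta> + a2 * snd e) mod m = v}" using key[of "snd e"] by auto
  qed
  have eq: "{e \<in> EE M. (\<delta> + a2 * snd e) mod m = v} = (\<Union>r\<in>?R. ?F r)"
    using eq1 eq2 by (rule subset_antisym)
  have fR: "finite ?R" using finite_int_range by auto
  have "card (\<Union>r\<in>?R. ?F r) = (\<Sum>r\<in>?R. card (?F r))"
  proof (rule card_UN_disjoint[OF fR])
    show "\<forall>i\<in>?R. finite (?F i)" using finite_EE by auto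
    show "\<forall>i\<in>?R. \<forall>j\<in>?R. i \<noteq> j \<longrightarrow> ?F i \<inter> ?F j = {}" by auto
  qed
  also have "\<dots> = (\<Sum>r\<in>?R. card {e \<in> EE M. snd e mod m = 0})"
  proof (rule sum.cong[OF refl])
    fix r assume "r \<in> ?R"
    then have "r mod m = r" by simp
    then show "card (?F r) = card {e \<in> EE M. snd e mod m = 0}"
      using W_const[OF m odd M, of r] by simp
  qed
  finally show ?thesis unfolding eq by simp
qed


lemma card_R_cop:
  fixes m a2 \<delta> v :: int
  assumes m: "m > 0" and cop: "coprime a2 m" and v: "0 \<le> v" "v < m"
  shows "card {r. 0 \<le> r \<and> r < 0 + int 1 * m \<and> (\<delta> + a2*r) mod m = v} = 1"
proof -
  have "v mod m = v" using v by simp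
  then show ?thesis using window[OF m cop, of 0 1 \<delta> v] by simp
qed

lemma card_R_3:
  fixes m m' c \<delta> v :: int
  assumes m: "m = 3 * m'" "m' > 0" and cop: "coprime c m'" and v: "0 \<le> v" "v < m"
  shows "card {r. 0 \<le> r \<and> r < 0 + int 1 * m \<and> (\<delta> + (3*c)*r) mod m = v} = (if 3 dvd (v - \<delta>) then 3 else 0)"
proof (cases "3 dvd (v - \<delta>)")
  case True
  then obtain w where w: "v - \<delta> = 3 * w" by blast
  have vm: "v mod m = v" using v by simp
  have "{r. 0 \<le> r \<and> r < 0 + int 1 * m \<and> (\<delta> + (3*c)*r) mod m = v}
      = {r. 0 \<le> r \<and> r < 0 + int 3 * m' \<and> (0 + c*r) mod m' = w mod m'}"
  proof -
    have "(\<delta> + (3*c)*r) mod m = v \<longleftrightarrow> (0 + c*r) mod m' = w mod m'" for r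
    proof -
      have "(\<delta> + (3*c)*r) mod m = v \<longleftrightarrow> (\<delta> + (3*c)*r) mod m = v mod m" using vm by simp
      also have "\<dots> \<longleftrightarrow> m dvd (\<delta> + (3*c)*r) - v" by (simp add: mod_eq_dvd_iff)
      also have "(\<delta> + (3*c)*r) - v = 3 * (c*r - w)" using w by (simp add: algebra_simps)
      also have "m dvd 3 * (c*r - w) \<longleftrightarrow> m' dvd (c*r - w)"
        unfolding m(1) by (rule dvd_times_left_cancel_iff) simp
      also have "\<dots> \<longleftrightarrow> (c*r) mod m' = w mod m'" by (simp add: mod_eq_dvd_iff)
      finally show ?thesis by simp
    qed
    then show ?thesis using m by auto
  qed
  also have "card \<dots> = 3" using window[OF m(2) cop, of 0 3 0 w] by simp
  finally show ?thesis using True by simp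
next
  case False
  have "\<not> ((\<delta> + (3*c)*r) mod m = v)" for r
  proof
    assume "(\<delta> + (3*c)*r) mod m = v"
    then have "(\<delta> + (3*c)*r) mod m = v mod m" using v by simp
    then have "m dvd (\<delta> + (3*c)*r) - v" by (simp add: mod_eq_dvd_iff)
    then have "3 dvd (\<delta> + (3*c)*r) - v" using m dvd_trans by (metis dvd_triv_left)
    moreover have "\<forall>x. 3 dvd \<delta> + 3*x - v \<longrightarrow> 3 dvd v - \<delta>" by presburger
    ultimately have "3 dvd (v - \<delta>)" by (metis mult.assoc)
    then show False using False by simp
  qed
  then have E: "{r. 0 \<le> r \<and> r < 0 + int 1 * m \<and> (\<delta> + (3*c)*r) mod m = v} = {}" by auto
  show ?thesis unfolding E using False by simp
qed

lemma H_sum: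
  fixes m a1 a2 v :: int
  assumes m: "m > 0" and odd: "odd m" and v: "0 \<le> v" "v < m"
    and s: "s = 1 \<or> s = -1" and al: "\<alpha> \<in> {0,1::nat}" and a2: "a2 = s * 3^\<alpha> * 2^\<beta>"
    and g: "\<not> 3 dvd gcd a1 a2"
  shows "card {r. 0 \<le> r \<and> r < 0 + int 1 * m \<and> (a1 + a2*r) mod m = v}
       + card {r. 0 \<le> r \<and> r < 0 + int 1 * m \<and> (0 + a2*r) mod m = v}
       + card {r. 0 \<le> r \<and> r < 0 + int 1 * m \<and> (-a1 + a2*r) mod m = v} = 3"
proof (cases "coprime a2 m")
  case True
  then show ?thesis using card_R_cop[OF m True v, of a1] card_R_cop[OF m True v, of 0]
    card_R_cop[OF m True v, of "-a1"] by simp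
next
  case False
  have cs: "coprime (s * 2^\<beta>) m" using s odd by (auto simp: coprime_commute)
  have a1: "\<alpha> = 1" using False al a2 cs by auto
  have "\<not> coprime 3 m" using False a2 a1 cs odd by (simp add: mult.commute mult.left_commute)
  then have "3 dvd m" using prime_imp_coprime[of 3 m] by auto
  then obtain m' where m': "m = 3 * m'" by blast
  have m'0: "m' > 0" using m m' by simp
  have cop': "coprime (s * 2^\<beta>) m'" using cs m' by simp
  have a2': "a2 = 3 * (s * 2^\<beta>)" using a2 a1 by simp
  have "3 dvd a2" using a2' by simp
  then have n3: "\<not> 3 dvd a1" using g by simp
  have e: "(if 3 dvd (v - a1) then 3 else 0) + (if 3 dvd (v - 0) then 3 else 0) + (if 3 dvd (v - (-a1)) then 3 else 0) = (3::nat)"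
    using n3 by presburger
  show ?thesis unfolding a2' using card_R_3[OF m' m'0 cop' v, of a1] card_R_3[OF m' m'0 cop' v, of 0]
      card_R_3[OF m' m'0 cop' v, of "-a1"] e by simp
qed



lemma class0:
  fixes M m x a1 a2 :: int and n :: nat
  assumes n: "int n = 3*M"
  shows "card {(i,j). i + j < n \<and> (int j - int i) mod 3 = 0 \<and> FF a1 a2 i (int j) mod m = x}
       = card {e \<in> EE M. (a1 + a2 * snd e) mod m = x}"
proof (rule bij_betw_same_card)
  let ?S = "{(i,j). i + j < n \<and> (int j - int i) mod 3 = 0 \<and> FF a1 a2 i (int j) mod m = x}"
  let ?T = "{e \<in> EE M. (a1 + a2 * snd e) mod m = x}"
  let ?f = "\<lambda>(i::nat,j::nat). (int j, (int i - int j) div 3)"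
  let ?g = "\<lambda>(y::int,t::int). (nat (y + 3*t), nat y)"
  show "bij_betw ?f ?S ?T"
  proof (rule bij_betw_byWitness[where f' = ?g])
    show "\<forall>a\<in>?S. ?g (?f a) = a"
    proof
      fix a assume "a \<in> ?S"
      then obtain i j where a: "a = (i,j)" "(int j - int i) mod 3 = 0" by auto
      then have "int i = int j + 3 * ((int i - int j) div 3)" by presburger
      then show "?g (?f a) = a" using a by (simp add: nat_eq_iff)
    qed
    show "\<forall>a\<in>?T. ?f (?g a) = a"
    proof
      fix a assume "a \<in> ?T"
      then obtain y t where a: "a = (y,t)" "0 \<le> y" "0 \<le> y + 3*t" unfolding EE_def by auto
      then show "?f (?g a) = a" by simp
    qed
    show "?f ` ?S \<subseteq> ?T"
    proof (rule image_subsetI)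
      fix a assume "a \<in> ?S"
      then obtain i j where a: "a = (i,j)" "(int j - int i) mod 3 = 0" "i + j < n"
        "FF a1 a2 i (int j) mod m = x" by auto
      define t where "t = (int i - int j) div 3"
      have it: "int i = int j + 3 * t" using a(2) unfolding t_def by presburger
      have "FF a1 a2 i (int j) = a1 - a2 * (-t)" by (rule FF0) (use it in simp)
      then have "(a1 + a2 * t) mod m = x" using a(4) by simp
      moreover have "(int j, t) \<in> EE M" unfolding EE_def using it a(3) n by auto
      ultimately show "?f a \<in> ?T" using a(1) t_def by simp
    qed
    show "?g ` ?T \<subseteq> ?S"
    proof (rule image_subsetI)
      fix a assume "a \<in> ?T"
      then obtain y t where a: "a = (y,t)" "0 \<le> y" "0 \<le> y + 3*t" "2*y + 3*t \<le> 3*M - 1"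
         "(a1 + a2 * t) mod m = x" unfolding EE_def by auto
      have "FF a1 a2 (nat (y + 3*t)) (int (nat y)) = a1 - a2 * (-t)" by (rule FF0) (use a in simp)
      then have "FF a1 a2 (nat (y + 3*t)) (int (nat y)) mod m = x" using a by simp
      moreover have "nat (y + 3*t) + nat y < n" using a n by linarith
      moreover have "(int (nat y) - int (nat (y + 3*t))) mod 3 = 0" using a by simp
      ultimately show "?g a \<in> ?S" using a by simp
    qed
  qed
qed


lemma class1:
  fixes M m x a1 a2 :: int and n lam :: nat
  assumes n: "int n = 3*M" and M: "M = int lam * m"
  shows "card {(i,j). i + j < n \<and> (int j - int i) mod 3 = 1 \<and> FF a1 a2 i (int j) mod m = x}
       = card {e \<in> EE M. (0 + a2 * snd e) mod m = x}"
proof (rule bij_betw_same_card)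
  let ?S = "{(i,j). i + j < n \<and> (int j - int i) mod 3 = 1 \<and> FF a1 a2 i (int j) mod m = x}"
  let ?T = "{e \<in> EE M. (0 + a2 * snd e) mod m = x}"
  let ?f = "\<lambda>(i::nat,j::nat). (3*M - 1 - int i - int j, (2 * int j + int i + 1) div 3 - M)"
  let ?g = "\<lambda>(y::int,t::int). (nat (3*M - 1 - 2*y - 3*t), nat (y + 3*t))"
  have modM: "(a2 * (t + M)) mod m = (0 + a2 * t) mod m" for t
  proof -
    have "a2 * (t + M) = a2 * t + m * (a2 * int lam)" unfolding M by (simp add: algebra_simps)
    then show ?thesis by (simp add: mod_eq_dvd_iff)
  qed
  show "bij_betw ?f ?S ?T"
  proof (rule bij_betw_byWitness[where f' = ?g])
    show "\<forall>a\<in>?S. ?g (?f a) = a"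
    proof
      fix a assume "a \<in> ?S"
      then obtain i j where a: "a = (i,j)" "(int j - int i) mod 3 = 1" "i + j < n" by auto
      define e where "e = (int j - int i) div 3"
      have je: "int j = int i + 3*e + 1" using a(2) unfolding e_def by presburger
      have d: "(2 * int j + int i + 1) div 3 = int i + 2*e + 1" using je by presburger
      have h1: "3*M - 1 - 2*(3*M - 1 - int i - int j) - 3*((2 * int j + int i + 1) div 3 - M) = int i"
        using d je by simp
      have h2: "(3*M - 1 - int i - int j) + 3*((2 * int j + int i + 1) div 3 - M) = int j"
        using d je by simp
      have "?g (?f a) = (nat (3*M - 1 - 2*(3*M - 1 - int i - int j) - 3*((2 * int j + int i + 1) div 3 - M)),
           nat ((3*M - 1 - int i - int j) + 3*((2 * int j + int i + 1) div 3 - M)))"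
        unfolding a(1) by (simp only: prod.case)
      also have "\<dots> = (nat (int i), nat (int j))" by (simp only: h1 h2)
      finally show "?g (?f a) = a" using a(1) by simp
    qed
    show "\<forall>a\<in>?T. ?f (?g a) = a"
    proof
      fix a assume "a \<in> ?T"
      then obtain y t where a: "a = (y,t)" "0 \<le> y" "0 \<le> y + 3*t" "2*y + 3*t \<le> 3*M - 1" unfolding EE_def by auto
      have d: "(2 * (y + 3*t) + (3*M - 1 - 2*y - 3*t) + 1) div 3 = t + M" by presburger
      have "int (nat (3*M - 1 - 2*y - 3*t)) = 3*M - 1 - 2*y - 3*t" using a by simp
      moreover have "int (nat (y + 3*t)) = y + 3*t" using a by simp
      ultimately show "?f (?g a) = a" using a d by (simp add: algebra_simps)
    qed
    show "?f ` ?S \<subseteq> ?T"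
    proof (rule image_subsetI)
      fix a assume "a \<in> ?S"
      then obtain i j where a: "a = (i,j)" "(int j - int i) mod 3 = 1" "i + j < n"
        "FF a1 a2 i (int j) mod m = x" by auto
      define e where "e = (int j - int i) div 3"
      have je: "int j = int i + 3*e + 1" using a(2) unfolding e_def by presburger
      have d: "(2 * int j + int i + 1) div 3 = int i + 2*e + 1" using je by presburger
      define t where "t = int i + 2*e + 1 - M"
      have "FF a1 a2 i (int j) = a2 * (int i + 2*e + 1)" by (rule FF1) (use je in simp)
      also have "\<dots> = a2 * (t + M)" unfolding t_def by simp
      finally have "(0 + a2 * t) mod m = x" using a(4) modM by simp
      moreover have "(3*M - 1 - int i - int j, t) \<in> EE M" unfolding EE_def t_def using je a(3) n by auto
      ultimately show "?f a \<in> ?T" using a(1) d t_def by simp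
    qed
    show "?g ` ?T \<subseteq> ?S"
    proof (rule image_subsetI)
      fix a assume "a \<in> ?T"
      then obtain y t where a: "a = (y,t)" "0 \<le> y" "0 \<le> y + 3*t" "2*y + 3*t \<le> 3*M - 1"
         "(0 + a2 * t) mod m = x" unfolding EE_def by auto
      define i where "i = nat (3*M - 1 - 2*y - 3*t)"
      define j where "j = nat (y + 3*t)"
      have ii: "int i = 3*M - 1 - 2*y - 3*t" unfolding i_def using a by simp
      have jj: "int j = y + 3*t" unfolding j_def using a by simp
      have "int j - int i = 3 * (y + 2*t - M) + 1" using ii jj by simp
      then have f: "FF a1 a2 i (int j) = a2 * (int i + 2*(y + 2*t - M) + 1)" by (rule FF1)
      have "int i + 2*(y + 2*t - M) + 1 = t + M" using ii by simp
      then have "FF a1 a2 i (int j) = a2 * (t + M)" using f by simp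
      then have "FF a1 a2 i (int j) mod m = x" using a modM by simp
      moreover have "i + j < n" using ii jj a n by linarith
      moreover have "(int j - int i) mod 3 = 1" using ii jj by presburger
      ultimately show "?g a \<in> ?S" using a i_def j_def by simp
    qed
  qed
qed

lemma class2:
  fixes M m x a1 a2 :: int and n lam :: nat
  assumes n: "int n = 3*M" and M: "M = int lam * m"
  shows "card {(i,j). i + j < n \<and> (int j - int i) mod 3 = 2 \<and> FF a1 a2 i (int j) mod m = x}
       = card {e \<in> EE M. (-a1 + a2 * snd e) mod m = x}"
proof (rule bij_betw_same_card)
  let ?S = "{(i,j). i + j < n \<and> (int j - int i) mod 3 = 2 \<and> FF a1 a2 i (int j) mod m = x}"
  let ?T = "{e \<in> EE M. (-a1 + a2 * snd e) mod m = x}"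
  let ?f = "\<lambda>(i::nat,j::nat). (int i, M - 1 - int i - (int j - int i) div 3)"
  let ?g = "\<lambda>(y::int,t::int). (nat y, nat (3*M - 1 - 2*y - 3*t))"
  have modM: "(-a1 - a2 * (M - t)) mod m = (-a1 + a2 * t) mod m" for t
  proof -
    have "-a1 - a2 * (M - t) = (-a1 + a2 * t) + m * (- a2 * int lam)" unfolding M by (simp add: algebra_simps)
    then show ?thesis by (simp add: mod_eq_dvd_iff)
  qed
  show "bij_betw ?f ?S ?T"
  proof (rule bij_betw_byWitness[where f' = ?g])
    show "\<forall>a\<in>?S. ?g (?f a) = a"
    proof
      fix a assume "a \<in> ?S"
      then obtain i j where a: "a = (i,j)" "(int j - int i) mod 3 = 2" "i + j < n" by auto
      define e where "e = (int j - int i) div 3"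
      have je: "int j = int i + 3*e + 2" using a(2) unfolding e_def by presburger
      have h2: "3*M - 1 - 2*int i - 3*(M - 1 - int i - (int j - int i) div 3) = int j"
        using je e_def by simp
      show "?g (?f a) = a" using a(1) h2 by simp
    qed
    show "\<forall>a\<in>?T. ?f (?g a) = a"
    proof
      fix a assume "a \<in> ?T"
      then obtain y t where a: "a = (y,t)" "0 \<le> y" "0 \<le> y + 3*t" "2*y + 3*t \<le> 3*M - 1" unfolding EE_def by auto
      have d: "((3*M - 1 - 2*y - 3*t) - y) div 3 = M - 1 - y - t" by presburger
      have "int (nat (3*M - 1 - 2*y - 3*t)) = 3*M - 1 - 2*y - 3*t" using a by simp
      moreover have "int (nat y) = y" using a by simp
      ultimately show "?f (?g a) = a" using a d by (simp add: algebra_simps)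
    qed
    show "?f ` ?S \<subseteq> ?T"
    proof (rule image_subsetI)
      fix a assume "a \<in> ?S"
      then obtain i j where a: "a = (i,j)" "(int j - int i) mod 3 = 2" "i + j < n"
        "FF a1 a2 i (int j) mod m = x" by auto
      define e where "e = (int j - int i) div 3"
      have je: "int j = int i + 3*e + 2" using a(2) unfolding e_def by presburger
      define t where "t = M - 1 - int i - e"
      have "FF a1 a2 i (int j) = -a1 - a2 * (int i + e + 1)" by (rule FF2) (use je in simp)
      also have "\<dots> = -a1 - a2 * (M - t)" unfolding t_def by simp
      finally have "(-a1 + a2 * t) mod m = x" using a(4) modM by simp
      moreover have "(int i, t) \<in> EE M" unfolding EE_def t_def using je a(3) n by auto
      ultimately show "?f a \<in> ?T" using a(1) t_def e_def by simp
    qed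
    show "?g ` ?T \<subseteq> ?S"
    proof (rule image_subsetI)
      fix a assume "a \<in> ?T"
      then obtain y t where a: "a = (y,t)" "0 \<le> y" "0 \<le> y + 3*t" "2*y + 3*t \<le> 3*M - 1"
         "(-a1 + a2 * t) mod m = x" unfolding EE_def by auto
      define i where "i = nat y"
      define j where "j = nat (3*M - 1 - 2*y - 3*t)"
      have ii: "int i = y" unfolding i_def using a by simp
      have jj: "int j = 3*M - 1 - 2*y - 3*t" unfolding j_def using a by simp
      have "int j - int i = 3 * (M - 1 - y - t) + 2" using ii jj by simp
      then have f: "FF a1 a2 i (int j) = -a1 - a2 * (int i + (M - 1 - y - t) + 1)" by (rule FF2)
      have "int i + (M - 1 - y - t) + 1 = M - t" using ii by simp
      then have "FF a1 a2 i (int j) = -a1 - a2 * (M - t)" using f by simp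
      then have "FF a1 a2 i (int j) mod m = x" using a modM by simp
      moreover have "i + j < n" using ii jj a n by linarith
      moreover have "(int j - int i) mod 3 = 2" using ii jj by presburger
      ultimately show "?g a \<in> ?S" using a i_def j_def by simp
    qed
  qed
qed


lemma count_total:
  fixes m M x a1 a2 s :: int and n lam :: nat
  assumes m: "m > 0" and odd: "odd m" and n: "int n = 3*M" and M: "M = int lam * m"
    and x: "0 \<le> x" "x < m"
    and s: "s = 1 \<or> s = -1" and al: "\<alpha> \<in> {0,1::nat}" and a2: "a2 = s * 3^\<alpha> * 2^\<beta>"
    and g: "\<not> 3 dvd gcd a1 a2"
  shows "card {(i,j). i + j < n \<and> FF a1 a2 i (int j) mod m = x} = 3 * card {e \<in> EE M. snd e mod m = 0}"
proof -
  let ?C = "\<lambda>d. {(i,j). i + j < n \<and> (int j - int i) mod 3 = d \<and> FF a1 a2 i (int j) mod m = x}"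
  have fin: "finite (?C d)" for d
    by (rule finite_subset[of _ "{..<n} \<times> {..<n}"]) auto
  have split: "{(i,j). i + j < n \<and> FF a1 a2 i (int j) mod m = x} = (?C 0 \<union> ?C 1) \<union> ?C 2"
  proof -
    have "(int j - int i) mod 3 = 0 \<or> (int j - int i) mod 3 = 1 \<or> (int j - int i) mod 3 = 2" for i j
      by presburger
    then show ?thesis by auto
  qed
  have "card {(i,j). i + j < n \<and> FF a1 a2 i (int j) mod m = x} = card (?C 0) + card (?C 1) + card (?C 2)"
    unfolding split
    by (subst card_Un_disjoint, (use fin in auto)[3])+ simp
  also have "\<dots> = card {e \<in> EE M. (a1 + a2 * snd e) mod m = x} + card {e \<in> EE M. (0 + a2 * snd e) mod m = x}
     + card {e \<in> EE M. (-a1 + a2 * snd e) mod m = x}"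
    using class0[OF n] class1[OF n M] class2[OF n M] by simp
  also have "\<dots> = card {e \<in> EE M. snd e mod m = 0} * (card {r. 0 \<le> r \<and> r < 0 + int 1 * m \<and> (a1 + a2*r) mod m = x}
       + card {r. 0 \<le> r \<and> r < 0 + int 1 * m \<and> (0 + a2*r) mod m = x}
       + card {r. 0 \<le> r \<and> r < 0 + int 1 * m \<and> (-a1 + a2*r) mod m = x})"
    unfolding count_E[OF m odd M] by (simp add: algebra_simps)
  also have "\<dots> = card {e \<in> EE M. snd e mod m = 0} * 3"
    using H_sum[OF m odd x s al a2 g] by simp
  finally show ?thesis by simp
qed


theorem corollary8:
  fixes A :: "nat \<Rightarrow> int" and m :: int
  assumes "A \<in> tuplesO" and "m > 0" and "odd m"
  shows "periodic_orbit m (IAP m (pim m A) (mulX24 m (pim m A))) (3 * m) (nat (3 * m))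
       \<and> (\<forall>lam::nat. balanced m (prefix_seq (IAP m (pim m A) (mulX24 m (pim m A))) (lam * nat (3 * m))))"
proof -
  obtain a1 a2 :: int and \<alpha> \<beta> :: nat and s :: int where
    s: "s = 1 \<or> s = -1" and al: "\<alpha> \<in> {0,1}" and a2: "a2 = s * 3^\<alpha> * 2^\<beta>"
    and g: "\<not> 3 dvd gcd a1 a2" and A: "A = (\<lambda>r. a1 * A1 r + a2 * A2 r)"
    using assms(1) unfolding tuplesO_def by blast
  define u where "u = IAP m (pim m A) (mulX24 m (pim m A))"
  have hu: "u j mod m = FF a1 a2 0 j mod m" for j unfolding u_def by (rule row0[OF A])
  have orb: "orbit m u i j = FF a1 a2 i j mod m" for i j by (rule orbit_FF[OF hu])
  have p: "int (nat (3*m)) = 3*m" using assms(2) by simp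
  have per: "periodic_orbit m u (3 * m) (nat (3 * m))"
    unfolding periodic_orbit_def orb using FF_per_i[OF p] FF_per_j by simp
  have bal: "balanced m (prefix_seq u (lam * nat (3 * m)))" for lam
  proof -
    define xs where "xs = prefix_seq u (lam * nat (3 * m))"
    define n where "n = lam * nat (3 * m)"
    define M where "M = int lam * m"
    have len: "length xs = n" unfolding xs_def n_def prefix_seq_def by simp
    have nM: "int n = 3*M" unfolding n_def M_def using p by simp
    have eq: "{(i, j). i + j < length xs \<and> tri m xs i j = x} = {(i,j). i + j < n \<and> FF a1 a2 i (int j) mod m = x}" for x
      using tri_orbit[OF xs_def] orb len by auto
    have "card {(i, j). i + j < length xs \<and> tri m xs i j = x} = 3 * card {e \<in> EE M. snd e mod m = 0}"
      if "x \<in> {0..<m}" for x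
      unfolding eq using count_total[OF assms(2,3) nM M_def _ _ s al a2 g] that by simp
    then show ?thesis unfolding balanced_def xs_def by simp
  qed
  show ?thesis using per bal unfolding u_def by simp
qed


end
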